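(* Let $k\in\{3,4,\dots\}$, let $\mathcal A=(A,\mathrm{cl})\in PG(\mathcal C_k)$ and let $C\subseteq A$ with $C\unlhd_\infty\mathcal A$. Then $C\unlhd_k\mathcal A$.
   Context: A set system is a pair $(A;R)$ where $R$ is a set of finite non-empty subsets of $A$; for $X\subseteq A$, $R[X]=\{r\in R:r\subseteq X\}$ and $\delta(X)=|X|-|R[X]|$. $\mathcal C=\mathcal C_\infty$ is the class of finite set systems with $\delta(X)\ge0$ for all $X\subseteq A$, and $\mathcal C_k$ is the class of members of $\mathcal C$ all of whose sets in $R$ have size at most $k$. $X\le(A;R)$ means $\delta(X)\le\delta(X')$ for all $X\subseteq X'\subseteq A$. For $(A;R)\in\mathcal C$, $d(X)=\min\{\delta(Y):X\subseteq Y\subseteq A\}$, $\mathrm{cl}(X)=\{y:d(X\cup\{y\})=d(X)\}$, and $PG(A;R)=(A,\mathrm{cl})$. A presentation of a matroid $\mathcal A$ is a set system $(A;R)\in\mathcal C$ with $PG(A;R)=\mathcal A$; $PG(\mathcal C_k)$ is the class of matroids having a presentation in $\mathcal C_k$. For $k\in\{3,4,\dots,\infty\}$ and $C\subseteq A$, $C\unlhd_k\mathcal A$ means there is a presentation $(A;R)\in\mathcal C_k$ of $\mathcal A$ with $C\le(A;R)$. *)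

theory Defs
  imports Main "HOL-Library.Extended_Nat"
begin

definition R_in :: "'a set set \<Rightarrow> 'a set \<Rightarrow> 'a set set" where
  "R_in R X = {r \<in> R. r \<subseteq> X}"

definition delta :: "'a set set \<Rightarrow> 'a set \<Rightarrow> int" where
  "delta R X = int (card X) - int (card (R_in R X))"

text \<open>Membership in C_k, with k an extended natural; k = \<infinity> gives C = C_\<infinity>.\<close>
definition in_C :: "enat \<Rightarrow> 'a set \<Rightarrow> 'a set set \<Rightarrow> bool" where
  "in_C k A R \<longleftrightarrow> finite A \<and> (\<forall>r\<in>R. finite r \<and> r \<noteq> {} \<and> r \<subseteq> A)
     \<and> (\<forall>X. X \<subseteq> A \<longrightarrow> delta R X \<ge> 0)
     \<and> (\<forall>r\<in>R. enat (card r) \<le> k)"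

definition self_sufficient :: "'a set \<Rightarrow> 'a set set \<Rightarrow> 'a set \<Rightarrow> bool" where
  "self_sufficient A R X \<longleftrightarrow> X \<subseteq> A \<and>
     (\<forall>X'. X \<subseteq> X' \<and> X' \<subseteq> A \<longrightarrow> delta R X \<le> delta R X')"

definition dim :: "'a set \<Rightarrow> 'a set set \<Rightarrow> 'a set \<Rightarrow> int" where
  "dim A R X = Min {delta R Y | Y. X \<subseteq> Y \<and> Y \<subseteq> A}"

definition pg_cl :: "'a set \<Rightarrow> 'a set set \<Rightarrow> 'a set \<Rightarrow> 'a set" where
  "pg_cl A R X = {y \<in> A. dim A R (X \<union> {y}) = dim A R X}"

definition presentation :: "enat \<Rightarrow> 'a set \<Rightarrow> ('a set \<Rightarrow> 'a set) \<Rightarrow> 'a set set \<Rightarrow> bool" where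
  "presentation k A cl R \<longleftrightarrow> in_C k A R \<and> (\<forall>X. X \<subseteq> A \<longrightarrow> pg_cl A R X = cl X)"

definition in_PG :: "enat \<Rightarrow> 'a set \<Rightarrow> ('a set \<Rightarrow> 'a set) \<Rightarrow> bool" where
  "in_PG k A cl \<longleftrightarrow> (\<exists>R. presentation k A cl R)"

definition strong_sub :: "enat \<Rightarrow> 'a set \<Rightarrow> ('a set \<Rightarrow> 'a set) \<Rightarrow> 'a set \<Rightarrow> bool" where
  "strong_sub k A cl C \<longleftrightarrow> (\<exists>R. presentation k A cl R \<and> self_sufficient A R C)"

end

theory Submission
  imports Defs
begin


definition Nc :: "'i set \<Rightarrow> ('i \<Rightarrow> 'a set) \<Rightarrow> 'a set \<Rightarrow> nat" where
  "Nc I g X = card {i\<in>I. g i \<subseteq> X}"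

definition Dg :: "'i set \<Rightarrow> ('i \<Rightarrow> 'a set) \<Rightarrow> 'a set \<Rightarrow> int" where
  "Dg I g X = int (card X) - int (Nc I g X)"

lemma Nc_supermod:
  assumes "finite I"
  shows "Nc I g X + Nc I g Y \<le> Nc I g (X \<union> Y) + Nc I g (X \<inter> Y)"
proof -
  let ?S = "\<lambda>Z. {i\<in>I. g i \<subseteq> Z}"
  have f: "\<And>Z. finite (?S Z)" using assms by auto
  have "card (?S X) + card (?S Y) = card (?S X \<union> ?S Y) + card (?S X \<inter> ?S Y)"
    using card_Un_Int[OF f f] by blast
  also have "?S X \<inter> ?S Y = ?S (X \<inter> Y)" by auto
  also have "card (?S X \<union> ?S Y) \<le> card (?S (X \<union> Y))"
    by (rule card_mono[OF f]) auto
  finally show ?thesis unfolding Nc_def by simp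
qed

lemma Dg_submod:
  assumes "finite I" "finite X" "finite Y"
  shows "Dg I g (X \<union> Y) + Dg I g (X \<inter> Y) \<le> Dg I g X + Dg I g Y"
proof -
  have "card X + card Y = card (X \<union> Y) + card (X \<inter> Y)"
    using card_Un_Int[OF assms(2,3)] .
  with Nc_supermod[OF assms(1), of g X Y] show ?thesis unfolding Dg_def by linarith
qed

lemma delta_Dg: "delta R X = Dg R id X"
  unfolding delta_def Dg_def Nc_def R_in_def by simp

lemma count_fibres:
  fixes Fl :: "'a set set" and f1 :: "'i \<Rightarrow> 'a set" and f2 :: "'j \<Rightarrow> 'a set"
  assumes finFl: "finite Fl" and finF: "\<forall>F\<in>Fl. finite F"
    and fI1: "finite I1" and fI2: "finite I2"
    and m1: "\<forall>i\<in>I1. f1 i \<in> Fl" and m2: "\<forall>j\<in>I2. f2 j \<in> Fl"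
    and eq: "\<forall>F\<in>Fl. card {i\<in>I1. f1 i \<subseteq> F} = card {j\<in>I2. f2 j \<subseteq> F}"
  shows "G \<in> Fl \<Longrightarrow> card {i\<in>I1. f1 i = G} = card {j\<in>I2. f2 j = G}"
proof (induction "card G" arbitrary: G rule: less_induct)
  case (less G)
  let ?P = "{F\<in>Fl. F \<subset> G}"
  have finP: "finite ?P" using finFl by auto
  have IH: "\<And>F. F \<in> ?P \<Longrightarrow> card {i\<in>I1. f1 i = F} = card {j\<in>I2. f2 j = F}"
  proof -
    fix F assume "F \<in> ?P"
    then have "F \<in> Fl" "card F < card G" using finF less.prems psubset_card_mono by auto
    then show "card {i\<in>I1. f1 i = F} = card {j\<in>I2. f2 j = F}" using less.hyps by blast
  qed
  have dec: "\<And>I (f :: 'k \<Rightarrow> 'a set). finite I \<Longrightarrow> \<forall>i\<in>I. f i \<in> Fl \<Longrightarrow>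
      card {i\<in>I. f i \<subseteq> G} = card {i\<in>I. f i = G} + (\<Sum>F\<in>?P. card {i\<in>I. f i = F})"
  proof -
    fix I and f :: "'k \<Rightarrow> 'a set"
    assume fI: "finite I" and mI: "\<forall>i\<in>I. f i \<in> Fl"
    have "{i\<in>I. f i \<subseteq> G} = {i\<in>I. f i = G} \<union> (\<Union>F\<in>?P. {i\<in>I. f i = F})"
      using mI by auto
    moreover have "card (\<Union>F\<in>?P. {i\<in>I. f i = F}) = (\<Sum>F\<in>?P. card {i\<in>I. f i = F})"
      by (rule card_UN_disjoint) (use finP fI in auto)
    moreover have "card ({i\<in>I. f i = G} \<union> (\<Union>F\<in>?P. {i\<in>I. f i = F}))
        = card {i\<in>I. f i = G} + card (\<Union>F\<in>?P. {i\<in>I. f i = F})"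
      by (rule card_Un_disjoint) (use fI in \<open>auto intro: rev_finite_subset\<close>)
    ultimately show "card {i\<in>I. f i \<subseteq> G} = card {i\<in>I. f i = G} + (\<Sum>F\<in>?P. card {i\<in>I. f i = F})"
      by simp
  qed
  have "(\<Sum>F\<in>?P. card {i\<in>I1. f1 i = F}) = (\<Sum>F\<in>?P. card {j\<in>I2. f2 j = F})"
    using IH by (rule sum.cong[OF refl])
  with dec[OF fI1 m1] dec[OF fI2 m2] eq less.prems show ?case by force
qed



locale ssys =
  fixes A :: "'a set" and R :: "'a set set"
  assumes finA: "finite A"
    and Rprop: "\<forall>r\<in>R. finite r \<and> r \<noteq> {} \<and> r \<subseteq> A"
    and nonneg: "\<forall>X. X \<subseteq> A \<longrightarrow> delta R X \<ge> 0"
begin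

lemma finR: "finite R"
proof -
  have "R \<subseteq> Pow A" using Rprop by auto
  moreover have "finite (Pow A)" using finA by simp
  ultimately show ?thesis by (rule finite_subset)
qed

lemma dimset_eq: "{delta R Y |Y. X \<subseteq> Y \<and> Y \<subseteq> A} = delta R ` {Y. X \<subseteq> Y \<and> Y \<subseteq> A}"
  by blast

lemma dimset_fin: "finite {delta R Y |Y. X \<subseteq> Y \<and> Y \<subseteq> A}"
proof -
  have "{Y. X \<subseteq> Y \<and> Y \<subseteq> A} \<subseteq> Pow A" by auto
  moreover have "finite (Pow A)" using finA by simp
  ultimately have "finite {Y. X \<subseteq> Y \<and> Y \<subseteq> A}" by (rule finite_subset)
  then show ?thesis unfolding dimset_eq by (rule finite_imageI)
qed

lemma dim_le: "X \<subseteq> Y \<Longrightarrow> Y \<subseteq> A \<Longrightarrow> dim A R X \<le> delta R Y"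
  unfolding dim_def by (rule Min_le[OF dimset_fin]) blast

lemma dim_ex: "X \<subseteq> A \<Longrightarrow> \<exists>Y. X \<subseteq> Y \<and> Y \<subseteq> A \<and> delta R Y = dim A R X"
proof -
  assume "X \<subseteq> A"
  then have ne: "{delta R Y |Y. X \<subseteq> Y \<and> Y \<subseteq> A} \<noteq> {}" by blast
  have "dim A R X \<in> {delta R Y |Y. X \<subseteq> Y \<and> Y \<subseteq> A}"
    unfolding dim_def by (rule Min_in[OF dimset_fin ne])
  then obtain Y where "dim A R X = delta R Y" "X \<subseteq> Y" "Y \<subseteq> A" by blast
  then show ?thesis by metis
qed

lemma dim_nonneg: "X \<subseteq> A \<Longrightarrow> dim A R X \<ge> 0"
proof -
  assume "X \<subseteq> A"
  from dim_ex[OF this] obtain Y where "X \<subseteq> Y" "Y \<subseteq> A" "delta R Y = dim A R X" by blast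
  moreover have "delta R Y \<ge> 0" using nonneg \<open>Y \<subseteq> A\<close> by blast
  ultimately show ?thesis by simp
qed

lemma dim_mono: "X \<subseteq> X' \<Longrightarrow> X' \<subseteq> A \<Longrightarrow> dim A R X \<le> dim A R X'"
proof -
  assume a: "X \<subseteq> X'" "X' \<subseteq> A"
  from dim_ex[OF a(2)] obtain Y where "X' \<subseteq> Y" "Y \<subseteq> A" "delta R Y = dim A R X'" by blast
  then show ?thesis using dim_le[of X Y] a by auto
qed

lemma delta_empty: "delta R {} = 0"
proof -
  have "R_in R {} = {}" unfolding R_in_def using Rprop by auto
  then show ?thesis unfolding delta_def by simp
qed

lemma dim_empty: "dim A R {} = 0"
proof -
  have "dim A R {} \<le> delta R {}" by (rule dim_le) auto
  moreover have "dim A R {} \<ge> 0" by (rule dim_nonneg) auto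
  ultimately show ?thesis using delta_empty by linarith
qed

lemma finite_sub: "X \<subseteq> A \<Longrightarrow> finite X"
  using finA by (metis finite_subset)

lemma fin_Rin: "finite (R_in R X)"
proof -
  have "R_in R X \<subseteq> R" unfolding R_in_def by blast
  then show ?thesis using finR by (metis finite_subset)
qed

lemma delta_insert: "Y \<subseteq> A \<Longrightarrow> delta R (insert x Y) \<le> delta R Y + 1"
proof -
  assume Y: "Y \<subseteq> A"
  have "card (insert x Y) \<le> Suc (card Y)"
    using card_insert_if[OF finite_sub[OF Y], of x] by (simp split: if_splits)
  moreover have "card (R_in R Y) \<le> card (R_in R (insert x Y))"
    by (rule card_mono[OF fin_Rin]) (auto simp: R_in_def)
  ultimately show ?thesis unfolding delta_def by linarith
qed

lemma dim_insert: "X \<subseteq> A \<Longrightarrow> x \<in> A \<Longrightarrow> dim A R (insert x X) \<le> dim A R X + 1"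
proof -
  assume a: "X \<subseteq> A" "x \<in> A"
  from dim_ex[OF a(1)] obtain Y where Y: "X \<subseteq> Y" "Y \<subseteq> A" "delta R Y = dim A R X" by blast
  have "dim A R (insert x X) \<le> delta R (insert x Y)" using Y a by (intro dim_le) auto
  also have "\<dots> \<le> delta R Y + 1" using delta_insert[OF Y(2)] .
  finally show ?thesis using Y by simp
qed

lemma delta_submod: "X \<subseteq> A \<Longrightarrow> Y \<subseteq> A \<Longrightarrow>
    delta R (X \<union> Y) + delta R (X \<inter> Y) \<le> delta R X + delta R Y"
  unfolding delta_Dg by (rule Dg_submod[OF finR]) (auto intro: finite_sub)

lemma dim_submod: "X \<subseteq> A \<Longrightarrow> Y \<subseteq> A \<Longrightarrow>
    dim A R (X \<union> Y) + dim A R (X \<inter> Y) \<le> dim A R X + dim A R Y"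
proof -
  assume a: "X \<subseteq> A" "Y \<subseteq> A"
  from dim_ex[OF a(1)] obtain X' where X': "X \<subseteq> X'" "X' \<subseteq> A" "delta R X' = dim A R X" by blast
  from dim_ex[OF a(2)] obtain Y' where Y': "Y \<subseteq> Y'" "Y' \<subseteq> A" "delta R Y' = dim A R Y" by blast
  have "dim A R (X \<union> Y) \<le> delta R (X' \<union> Y')" using X' Y' by (intro dim_le) auto
  moreover have "dim A R (X \<inter> Y) \<le> delta R (X' \<inter> Y')" using X' Y' by (intro dim_le) auto
  ultimately show ?thesis using delta_submod[OF X'(2) Y'(2)] X' Y' by linarith
qed

abbreviation "cl \<equiv> pg_cl A R"
abbreviation "d \<equiv> dim A R"

lemma cl_sub: "cl X \<subseteq> A" unfolding pg_cl_def by auto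

lemma cl_ext: "X \<subseteq> A \<Longrightarrow> X \<subseteq> cl X"
  unfolding pg_cl_def by (auto simp: insert_absorb)

lemma dim_cl_aux: "finite U \<Longrightarrow> X \<subseteq> A \<Longrightarrow> U \<subseteq> cl X \<Longrightarrow> d (X \<union> U) = d X"
proof (induction U rule: finite_induct)
  case empty then show ?case by simp
next
  case (insert y U)
  have yA: "y \<in> A" and ycl: "d (X \<union> {y}) = d X" using insert.prems unfolding pg_cl_def by auto
  have UA: "X \<union> U \<subseteq> A" using insert.prems cl_sub by blast
  have IH: "d (X \<union> U) = d X" using insert by blast
  have s: "d ((X \<union> U) \<union> (X \<union> {y})) + d ((X \<union> U) \<inter> (X \<union> {y})) \<le> d (X \<union> U) + d (X \<union> {y})"
    by (rule dim_submod) (use UA yA in auto)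
  have "d X \<le> d ((X \<union> U) \<inter> (X \<union> {y}))" by (rule dim_mono) (use UA in auto)
  moreover have "d ((X \<union> U) \<union> (X \<union> {y})) = d (X \<union> insert y U)"
  proof -
    have "(X \<union> U) \<union> (X \<union> {y}) = X \<union> insert y U" by auto
    then show ?thesis by simp
  qed
  moreover have "d (X \<union> U) \<le> d (X \<union> insert y U)" by (rule dim_mono) (use UA yA in auto)
  ultimately show ?case using s IH ycl by linarith
qed

lemma dim_cl: "X \<subseteq> A \<Longrightarrow> d (cl X) = d X"
proof -
  assume X: "X \<subseteq> A"
  have "d (X \<union> cl X) = d X" by (rule dim_cl_aux[OF _ X]) (use cl_sub finite_sub in auto)
  moreover have "X \<union> cl X = cl X" using cl_ext[OF X] by auto
  ultimately show ?thesis by simp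
qed

lemma cl_idem: "X \<subseteq> A \<Longrightarrow> cl (cl X) = cl X"
proof
  assume X: "X \<subseteq> A"
  show "cl X \<subseteq> cl (cl X)" by (rule cl_ext[OF cl_sub])
  show "cl (cl X) \<subseteq> cl X"
  proof
    fix y assume y: "y \<in> cl (cl X)"
    then have yA: "y \<in> A" and e: "d (cl X \<union> {y}) = d (cl X)" unfolding pg_cl_def by auto
    have "d (X \<union> {y}) \<le> d (cl X \<union> {y})" by (rule dim_mono) (use cl_ext[OF X] cl_sub yA in auto)
    moreover have "d X \<le> d (X \<union> {y})" by (rule dim_mono) (use X yA in auto)
    ultimately have "d (X \<union> {y}) = d X" using e dim_cl[OF X] by linarith
    then show "y \<in> cl X" using yA unfolding pg_cl_def by auto
  qed
qed

lemma cl_least: "X \<subseteq> F \<Longrightarrow> F \<subseteq> A \<Longrightarrow> cl F = F \<Longrightarrow> cl X \<subseteq> F"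
proof
  fix y assume a: "X \<subseteq> F" "F \<subseteq> A" "cl F = F" and y: "y \<in> cl X"
  then have yA: "y \<in> A" and e: "d (X \<union> {y}) = d X" unfolding pg_cl_def by auto
  have s: "d (F \<union> (X \<union> {y})) + d (F \<inter> (X \<union> {y})) \<le> d F + d (X \<union> {y})"
    by (rule dim_submod) (use a yA in auto)
  have "d X \<le> d (F \<inter> (X \<union> {y}))" by (rule dim_mono) (use a in auto)
  moreover have "d (F \<union> (X \<union> {y})) = d (F \<union> {y})"
  proof -
    have "F \<union> (X \<union> {y}) = F \<union> {y}" using a by auto
    then show ?thesis by simp
  qed
  moreover have "d F \<le> d (F \<union> {y})" by (rule dim_mono) (use a yA in auto)
  ultimately have "d (F \<union> {y}) = d F" using s e by linarith
  then show "y \<in> F" using yA a(3) unfolding pg_cl_def by blast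
qed

lemma flat_sub_iff: "X \<subseteq> A \<Longrightarrow> F \<subseteq> A \<Longrightarrow> cl F = F \<Longrightarrow> (X \<subseteq> F \<longleftrightarrow> cl X \<subseteq> F)"
  using cl_least cl_ext by blast

lemma flat_delta: "F \<subseteq> A \<Longrightarrow> cl F = F \<Longrightarrow> delta R F = d F"
proof -
  assume F: "F \<subseteq> A" "cl F = F"
  from dim_ex[OF F(1)] obtain Y where Y: "F \<subseteq> Y" "Y \<subseteq> A" "delta R Y = d F" by blast
  have "d Y \<le> delta R Y" using dim_le[of Y Y] Y by simp
  have "Y \<subseteq> F"
  proof
    fix y assume "y \<in> Y"
    have "d F \<le> d (F \<union> {y})" by (rule dim_mono) (use F Y \<open>y\<in>Y\<close> in auto)
    moreover have "d (F \<union> {y}) \<le> d Y" by (rule dim_mono) (use F Y \<open>y\<in>Y\<close> in auto)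
    ultimately have "d (F \<union> {y}) = d F" using \<open>d Y \<le> delta R Y\<close> Y by linarith
    then show "y \<in> F" using F Y \<open>y\<in>Y\<close> unfolding pg_cl_def by blast
  qed
  then show ?thesis using Y by auto
qed

lemma dim_insert_cl: "X \<subseteq> A \<Longrightarrow> x \<in> A \<Longrightarrow>
    d (insert x X) = d X + (if x \<in> cl X then 0 else 1)"
proof -
  assume a: "X \<subseteq> A" "x \<in> A"
  have "d X \<le> d (insert x X)" by (rule dim_mono) (use a in auto)
  moreover have "d (insert x X) \<le> d X + 1" using dim_insert[OF a] .
  moreover have "x \<in> cl X \<longleftrightarrow> d (insert x X) = d X" using a unfolding pg_cl_def by auto
  ultimately show ?thesis by auto
qed

end

lemma dim_eq_of_cl:
  assumes P: "ssys A P" and Q: "ssys A Q"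
    and e: "\<forall>X. X \<subseteq> A \<longrightarrow> pg_cl A P X = pg_cl A Q X"
  shows "X \<subseteq> A \<Longrightarrow> dim A P X = dim A Q X"
proof -
  assume X: "X \<subseteq> A"
  have "finite X" using X ssys.finite_sub[OF P] by blast
  then show ?thesis using X
  proof (induction X rule: finite_induct)
    case empty then show ?case using ssys.dim_empty[OF P] ssys.dim_empty[OF Q] by simp
  next
    case (insert x X)
    then show ?case using ssys.dim_insert_cl[OF P, of X x] ssys.dim_insert_cl[OF Q, of X x] e by auto
  qed
qed



context ssys
begin

definition valid :: "('a set \<Rightarrow> 'a set) \<Rightarrow> bool" where
  "valid g \<longleftrightarrow> (\<forall>r\<in>R. g r \<subseteq> r \<and> g r \<noteq> {}) \<and> (\<forall>X. X \<subseteq> A \<longrightarrow> d X \<le> Dg R g X)"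

lemma valid_id: "valid id"
  unfolding valid_def using Rprop dim_le[of _ _] by (auto simp: delta_Dg[symmetric])

lemma Nc_fin: "finite {r\<in>R. g r \<subseteq> X}"
  using finR by simp

lemma Dg_le_delta: "\<forall>r\<in>R. g r \<subseteq> r \<Longrightarrow> Dg R g X \<le> delta R X"
proof -
  assume a: "\<forall>r\<in>R. g r \<subseteq> r"
  have "card {r\<in>R. id r \<subseteq> X} \<le> card {r\<in>R. g r \<subseteq> X}"
    by (rule card_mono[OF Nc_fin]) (use a in auto)
  then show ?thesis unfolding delta_Dg Dg_def Nc_def by simp
qed

lemma valid_ge: "valid g \<Longrightarrow> X \<subseteq> A \<Longrightarrow> d X \<le> Dg R g X"
  unfolding valid_def by blast

lemma valid_ex: "valid g \<Longrightarrow> X \<subseteq> A \<Longrightarrow> \<exists>Y. X \<subseteq> Y \<and> Y \<subseteq> A \<and> Dg R g Y \<le> d X"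
proof -
  assume v: "valid g" and X: "X \<subseteq> A"
  from dim_ex[OF X] obtain Y where Y: "X \<subseteq> Y" "Y \<subseteq> A" "delta R Y = d X" by blast
  have "Dg R g Y \<le> delta R Y" by (rule Dg_le_delta) (use v in \<open>auto simp: valid_def\<close>)
  then show ?thesis using Y by auto
qed

lemma tight_ss: "valid g \<Longrightarrow> Dg R g X \<le> d X \<Longrightarrow> X \<subseteq> Z \<Longrightarrow> Z \<subseteq> A \<Longrightarrow> Dg R g X \<le> Dg R g Z"
proof -
  assume v: "valid g" and t: "Dg R g X \<le> d X" and XZ: "X \<subseteq> Z" "Z \<subseteq> A"
  have "d X \<le> d Z" using XZ by (rule dim_mono)
  moreover have "d Z \<le> Dg R g Z" using valid_ge[OF v XZ(2)] .
  ultimately show ?thesis using t by linarith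
qed

lemma Dg_sm: "X \<subseteq> A \<Longrightarrow> Y \<subseteq> A \<Longrightarrow> Dg R g (X \<union> Y) + Dg R g (X \<inter> Y) \<le> Dg R g X + Dg R g Y"
  by (rule Dg_submod[OF finR]) (auto intro: finite_sub)

lemma tight_Int:
  assumes v: "valid g" and X: "X \<subseteq> A" and Y: "Y \<subseteq> A"
    and tX: "Dg R g X \<le> d X" and tY: "Dg R g Y \<le> d Y"
  shows "Dg R g (X \<inter> Y) \<le> d (X \<inter> Y)"
proof -
  have XY: "X \<inter> Y \<subseteq> A" using X by auto
  from valid_ex[OF v XY] obtain Z where Z: "X \<inter> Y \<subseteq> Z" "Z \<subseteq> A" "Dg R g Z \<le> d (X \<inter> Y)" by blast
  have s1: "Dg R g (Z \<union> X) + Dg R g (Z \<inter> X) \<le> Dg R g Z + Dg R g X" using Dg_sm[OF Z(2) X] .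
  have "Dg R g X \<le> Dg R g (Z \<union> X)" by (rule tight_ss[OF v tX]) (use X Z in auto)
  with s1 have a: "Dg R g (Z \<inter> X) \<le> Dg R g Z" by linarith
  have ZX: "Z \<inter> X \<subseteq> A" using X by auto
  have s2: "Dg R g ((Z \<inter> X) \<union> Y) + Dg R g ((Z \<inter> X) \<inter> Y) \<le> Dg R g (Z \<inter> X) + Dg R g Y"
    using Dg_sm[OF ZX Y] .
  have "Dg R g Y \<le> Dg R g ((Z \<inter> X) \<union> Y)" by (rule tight_ss[OF v tY]) (use Y ZX in auto)
  with s2 have b: "Dg R g ((Z \<inter> X) \<inter> Y) \<le> Dg R g (Z \<inter> X)" by linarith
  have "(Z \<inter> X) \<inter> Y = X \<inter> Y" using Z(1) by auto
  with a b Z(3) show ?thesis by simp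
qed

end



lemma card_ins_le: "finite B \<Longrightarrow> insert a S \<subseteq> B \<Longrightarrow> a \<notin> S \<Longrightarrow> Suc (card S) \<le> card B"
proof -
  assume f: "finite B" and s: "insert a S \<subseteq> B" and a: "a \<notin> S"
  have fS: "finite S" using f s by (meson finite_subset subset_insertI2 subset_refl insert_subset)
  have "card (insert a S) = Suc (card S)" using fS a by simp
  moreover have "card (insert a S) \<le> card B" using card_mono[OF f s] .
  ultimately show ?thesis by simp
qed

context ssys
begin

lemma shrink:
  assumes v: "valid g" and r0: "r0 \<in> R" and x0: "x0 \<in> g r0"
    and bad: "d (g r0 - {x0}) < int (card (g r0)) - 1"
  shows "\<exists>x\<in>g r0. valid (g(r0 := g r0 - {x}))"
proof (rule ccontr)
  assume H0: "\<not> (\<exists>x\<in>g r0. valid (g(r0 := g r0 - {x})))"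
  define c where "c = g r0"
  define D where "D = Dg R g"
  define N where "N = (\<lambda>X. card {r\<in>R. g r \<subseteq> X})"
  have Deq: "\<And>X. D X = int (card X) - int (N X)" unfolding D_def N_def Dg_def Nc_def by simp
  have gsub: "\<forall>r\<in>R. g r \<subseteq> r \<and> g r \<noteq> {}" using v unfolding valid_def by blast
  have cA: "c \<subseteq> A" using gsub r0 Rprop unfolding c_def by blast
  have finc: "finite c" using cA by (rule finite_sub)
  have x0c: "x0 \<in> c" using x0 c_def by simp
  have vge: "\<And>X. X \<subseteq> A \<Longrightarrow> d X \<le> D X" unfolding D_def using valid_ge[OF v] .
  have Nfin: "\<And>X. finite {r\<in>R. g r \<subseteq> X}" using finR by simp
  have c2: "\<And>x. x \<in> c \<Longrightarrow> c - {x} \<noteq> {}"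
  proof
    fix x assume xc: "x \<in> c" and e: "c - {x} = {}"
    then have "c = {x}" by auto
    then have "c = {x0}" using x0c by auto
    then have "d (c - {x0}) = 0" "card c = 1" using dim_empty by auto
    then show False using bad c_def by simp
  qed
  have block: "\<And>x. x \<in> c \<Longrightarrow> \<exists>X. X \<subseteq> A \<and> c - {x} \<subseteq> X \<and> x \<notin> X \<and> D X \<le> d X"
  proof -
    fix x assume xc: "x \<in> c"
    define g' where "g' = g(r0 := c - {x})"
    have "\<not> valid g'" using H0 xc unfolding g'_def c_def by blast
    moreover have "\<forall>r\<in>R. g' r \<subseteq> r \<and> g' r \<noteq> {}"
      using gsub c2[OF xc] r0 unfolding g'_def c_def by auto
    ultimately obtain X where X: "X \<subseteq> A" "\<not> d X \<le> Dg R g' X" unfolding valid_def by blast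
    show "\<exists>X. X \<subseteq> A \<and> c - {x} \<subseteq> X \<and> x \<notin> X \<and> D X \<le> d X"
    proof (cases "c - {x} \<subseteq> X \<and> x \<notin> X")
      case False
      have key: "(c - {x} \<subseteq> X) = (c \<subseteq> X)" using False xc by auto
      have "\<And>r. (g' r \<subseteq> X) = (g r \<subseteq> X)"
      proof -
        fix r show "(g' r \<subseteq> X) = (g r \<subseteq> X)"
        proof (cases "r = r0")
          case True then show ?thesis using key unfolding g'_def c_def by simp
        next
          case False then show ?thesis unfolding g'_def by simp
        qed
      qed
      then have "{r\<in>R. g' r \<subseteq> X} = {r\<in>R. g r \<subseteq> X}" by simp
      then have "Dg R g' X = D X" unfolding D_def Dg_def Nc_def by simp
      then have False using vge[OF X(1)] X(2) by linarith
      then show ?thesis by blast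
    next
      case True
      have "{r\<in>R. g' r \<subseteq> X} = insert r0 {r\<in>R. g r \<subseteq> X}"
        using True r0 unfolding g'_def c_def by auto
      moreover have "r0 \<notin> {r\<in>R. g r \<subseteq> X}" using True xc unfolding c_def by auto
      ultimately have "card {r\<in>R. g' r \<subseteq> X} = Suc (N X)"
        unfolding N_def using Nfin by simp
      then have "Dg R g' X = D X - 1" unfolding Deq Dg_def Nc_def by simp
      then have "D X \<le> d X" using X(2) by linarith
      then show ?thesis using True X(1) by blast
    qed
  qed
  define P where "P = (\<lambda>Y. Y \<subseteq> A \<and> c \<subseteq> Y \<and> D Y \<le> d Y)"
  have PA: "P A"
  proof -
    from valid_ex[OF v subset_refl] obtain Y where "A \<subseteq> Y" "Y \<subseteq> A" "Dg R g Y \<le> d A" by blast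
    then show ?thesis unfolding P_def D_def using cA by auto
  qed
  obtain H where PH: "P H" and Hmin: "\<forall>Y. P Y \<longrightarrow> card H \<le> card Y"
    using ex_has_least_nat[of P A card] PA by blast
  have HA: "H \<subseteq> A" and cH: "c \<subseteq> H" and tH: "D H \<le> d H" using PH unfolding P_def by auto
  have finH: "finite H" using HA by (rule finite_sub)
  have hmin: "\<And>Y. Y \<subseteq> A \<Longrightarrow> c \<subseteq> Y \<Longrightarrow> D Y \<le> d Y \<Longrightarrow> H \<subseteq> Y"
  proof -
    fix Y assume Y: "Y \<subseteq> A" "c \<subseteq> Y" "D Y \<le> d Y"
    have "D (H \<inter> Y) \<le> d (H \<inter> Y)" unfolding D_def
      by (rule tight_Int[OF v HA Y(1)]) (use tH Y(3) D_def in auto)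
    then have "P (H \<inter> Y)" unfolding P_def using HA Y cH by auto
    then have "card H \<le> card (H \<inter> Y)" using Hmin by blast
    then have "H \<inter> Y = H" by (intro card_seteq[OF finH]) auto
    then show "H \<subseteq> Y" by blast
  qed
  have Hx: "\<And>x. x \<in> c \<Longrightarrow> D (H - {x}) \<le> d (H - {x}) \<and> N (H - {x}) + 1 = N H"
  proof -
    fix x assume xc: "x \<in> c"
    from block[OF xc] obtain X where X: "X \<subseteq> A" "c - {x} \<subseteq> X" "x \<notin> X" "D X \<le> d X" by blast
    define W where "W = X \<inter> H"
    have WA: "W \<subseteq> A" using HA W_def by auto
    have tW: "D W \<le> d W" unfolding W_def D_def
      by (rule tight_Int[OF v X(1) HA]) (use X(4) tH D_def in auto)
    have xW: "x \<notin> W" using X W_def by auto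
    have cW: "c - {x} \<subseteq> W" using X cH W_def by auto
    have xA: "x \<in> A" using xc cA by auto
    have "insert r0 {r\<in>R. g r \<subseteq> W} \<subseteq> {r\<in>R. g r \<subseteq> insert x W}"
      using r0 cW unfolding c_def by auto
    moreover have "r0 \<notin> {r\<in>R. g r \<subseteq> W}" using xW xc unfolding c_def by auto
    ultimately have "Suc (N W) \<le> N (insert x W)" unfolding N_def
      by (rule card_ins_le[OF Nfin])
    moreover have "card (insert x W) = Suc (card W)" using xW finite_sub[OF WA] by simp
    ultimately have "D (insert x W) \<le> D W" unfolding Deq by simp
    moreover have "d W \<le> d (insert x W)" by (rule dim_mono) (use WA xA in auto)
    ultimately have tW': "D (insert x W) \<le> d (insert x W)" using tW by linarith
    have "H \<subseteq> insert x W" by (rule hmin) (use WA xA cW tW' in auto)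
    moreover have "W \<subseteq> H" using W_def by auto
    ultimately have WH: "W = H - {x}" using xW by auto
    have tHx: "D (H - {x}) \<le> d (H - {x})" using tW WH by simp
    have xH: "x \<in> H" using xc cH by auto
    have "d (H - {x}) \<le> d H" by (rule dim_mono) (use HA in auto)
    moreover have "d H \<le> D H" using vge[OF HA] .
    moreover have "card (H - {x}) + 1 = card H" using xH finH
      by (metis Suc_eq_plus1 card_Suc_Diff1)
    ultimately have le1: "N H \<le> N (H - {x}) + 1" using tHx unfolding Deq by linarith
    have "insert r0 {r\<in>R. g r \<subseteq> H - {x}} \<subseteq> {r\<in>R. g r \<subseteq> H}"
      using r0 cH unfolding c_def by auto
    moreover have "r0 \<notin> {r\<in>R. g r \<subseteq> H - {x}}" using xc unfolding c_def by auto
    ultimately have "Suc (N (H - {x})) \<le> N H" unfolding N_def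
      by (rule card_ins_le[OF Nfin])
    with le1 tHx show "D (H - {x}) \<le> d (H - {x}) \<and> N (H - {x}) + 1 = N H" by simp
  qed
  have uniq: "\<And>x r. x \<in> c \<Longrightarrow> r \<in> R \<Longrightarrow> g r \<subseteq> H \<Longrightarrow> x \<in> g r \<Longrightarrow> r = r0"
  proof (rule ccontr)
    fix x r assume xc: "x \<in> c" and r: "r \<in> R" "g r \<subseteq> H" "x \<in> g r" and ne: "r \<noteq> r0"
    have "insert r (insert r0 {r\<in>R. g r \<subseteq> H - {x}}) \<subseteq> {r\<in>R. g r \<subseteq> H}"
      using r0 cH r unfolding c_def by auto
    moreover have "r0 \<notin> {r\<in>R. g r \<subseteq> H - {x}}" using xc unfolding c_def by auto
    moreover have "r \<notin> insert r0 {r\<in>R. g r \<subseteq> H - {x}}" using r ne by auto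
    ultimately have "Suc (card (insert r0 {r\<in>R. g r \<subseteq> H - {x}})) \<le> N H" unfolding N_def
      by (intro card_ins_le[OF Nfin])
    moreover have "card (insert r0 {r\<in>R. g r \<subseteq> H - {x}}) = Suc (N (H - {x}))"
      unfolding N_def using Nfin \<open>r0 \<notin> {r\<in>R. g r \<subseteq> H - {x}}\<close> by simp
    ultimately have "Suc (Suc (N (H - {x}))) \<le> N H" by simp
    then show False using Hx[OF xc] by simp
  qed
  have tHY: "\<And>Y. finite Y \<Longrightarrow> Y \<noteq> {} \<Longrightarrow> Y \<subseteq> c \<Longrightarrow> D (H - Y) \<le> d (H - Y)"
  proof -
    fix Y :: "'a set" assume "finite Y" "Y \<noteq> {}" "Y \<subseteq> c"
    then show "D (H - Y) \<le> d (H - Y)"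
    proof (induction Y rule: finite_ne_induct)
      case (singleton x) then show ?case using Hx by auto
    next
      case (insert x Y)
      have e: "H - insert x Y = (H - {x}) \<inter> (H - Y)" by auto
      have "Dg R g ((H - {x}) \<inter> (H - Y)) \<le> d ((H - {x}) \<inter> (H - Y))"
        by (rule tight_Int[OF v]) (use HA Hx insert D_def in auto)
      then show ?case using e D_def by simp
    qed
  qed
  have tHc: "D (H - c) \<le> d (H - c)" using tHY[OF finc] x0c cH by auto
  have "{r\<in>R. g r \<subseteq> H} = insert r0 {r\<in>R. g r \<subseteq> H - c}"
  proof
    show "insert r0 {r\<in>R. g r \<subseteq> H - c} \<subseteq> {r\<in>R. g r \<subseteq> H}" using r0 cH c_def by auto
    show "{r\<in>R. g r \<subseteq> H} \<subseteq> insert r0 {r\<in>R. g r \<subseteq> H - c}"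
    proof
      fix r assume r: "r \<in> {r\<in>R. g r \<subseteq> H}"
      show "r \<in> insert r0 {r\<in>R. g r \<subseteq> H - c}"
      proof (cases "g r \<inter> c = {}")
        case True then show ?thesis using r by auto
      next
        case False
        then obtain x where "x \<in> g r" "x \<in> c" by auto
        then show ?thesis using uniq r by auto
      qed
    qed
  qed
  moreover have "r0 \<notin> {r\<in>R. g r \<subseteq> H - c}" using x0c c_def by auto
  ultimately have NHc: "N H = Suc (N (H - c))" unfolding N_def using Nfin by simp
  have cardHc: "card (H - c) + card c = card H" using cH finH
    by (metis card_Diff_subset finite_subset le_add_diff_inverse2 card_mono)
  have DHc: "D (H - c) = D H - int (card c) + 1" unfolding Deq using NHc cardHc by simp
  have HcA: "H - c \<subseteq> A" using HA by auto
  have dHc: "d (H - c) = D (H - c)" using tHc vge[OF HcA] by simp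
  have dH: "d H = D H" using tH vge[OF HA] by simp
  have Hx0A: "H - {x0} \<subseteq> A" using HA by auto
  have "N (H - {x0}) + 1 = N H" using Hx[OF x0c] by simp
  moreover have "card (H - {x0}) + 1 = card H" using x0c cH finH
    by (metis Suc_eq_plus1 card_Suc_Diff1 subsetD)
  ultimately have "D (H - {x0}) = D H" unfolding Deq by simp
  then have dHx0: "d (H - {x0}) = d H" using Hx[OF x0c] vge[OF Hx0A] dH by simp
  have cx0A: "c - {x0} \<subseteq> A" using cA by auto
  have sm: "d ((H - c) \<union> (c - {x0})) + d ((H - c) \<inter> (c - {x0})) \<le> d (H - c) + d (c - {x0})"
    using dim_submod[OF HcA cx0A] .
  have "(H - c) \<union> (c - {x0}) = H - {x0}" using cH x0c by auto
  moreover have "(H - c) \<inter> (c - {x0}) = {}" by auto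
  ultimately have "d (H - {x0}) + d {} \<le> d (H - c) + d (c - {x0})" using sm by simp
  then have "d (c - {x0}) \<ge> int (card c) - 1" using dHx0 dim_empty dHc DHc dH by simp
  then show False using bad c_def by simp
qed

end



context ssys
begin

lemma ssys_R: "ssys A R"
  by (rule ssys.intro) (use finA Rprop nonneg in auto)

lemma main_construct:
  assumes S: "ssys A S" and clS: "\<forall>X. X \<subseteq> A \<longrightarrow> pg_cl A S X = cl X"
    and kS: "\<forall>s\<in>S. card s \<le> k" and ssC: "self_sufficient A R C"
  shows "\<exists>T. in_C (enat k) A T \<and> (\<forall>X. X \<subseteq> A \<longrightarrow> pg_cl A T X = cl X) \<and> self_sufficient A T C"
proof -
  have dimS: "\<And>X. X \<subseteq> A \<Longrightarrow> dim A S X = d X"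
    by (rule dim_eq_of_cl[OF S ssys_R]) (use clS in auto)
  define \<mu> where "\<mu> = (\<lambda>g::'a set \<Rightarrow> 'a set. \<Sum>r\<in>R. card (g r))"
  obtain g where v: "valid g" and gmin: "\<forall>g'. valid g' \<longrightarrow> \<mu> g \<le> \<mu> g'"
    using ex_has_least_nat[of valid id \<mu>] valid_id by blast
  have gsub: "\<forall>r\<in>R. g r \<subseteq> r \<and> g r \<noteq> {}" using v unfolding valid_def by blast
  have gA: "\<And>r. r \<in> R \<Longrightarrow> g r \<subseteq> A" using gsub Rprop by blast
  have gfin: "\<And>r. r \<in> R \<Longrightarrow> finite (g r)" using gA finite_sub by blast
  have Nfin: "\<And>X. finite {r\<in>R. g r \<subseteq> X}" using finR by simp
  have circ: "\<And>r x. r \<in> R \<Longrightarrow> x \<in> g r \<Longrightarrow> int (card (g r)) - 1 \<le> d (g r - {x})"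
  proof (rule ccontr)
    fix r0 x0 assume r0: "r0 \<in> R" and x0: "x0 \<in> g r0"
      and n: "\<not> int (card (g r0)) - 1 \<le> d (g r0 - {x0})"
    then have "d (g r0 - {x0}) < int (card (g r0)) - 1" by simp
    from shrink[OF v r0 x0 this] obtain x where x: "x \<in> g r0" and v': "valid (g(r0 := g r0 - {x}))"
      by blast
    define g' where "g' = g(r0 := g r0 - {x})"
    have "\<mu> g = card (g r0) + (\<Sum>r\<in>R - {r0}. card (g r))"
      unfolding \<mu>_def using sum.remove[OF finR r0] .
    moreover have "\<mu> g' = card (g' r0) + (\<Sum>r\<in>R - {r0}. card (g' r))"
      unfolding \<mu>_def using sum.remove[OF finR r0] .
    moreover have "(\<Sum>r\<in>R - {r0}. card (g' r)) = (\<Sum>r\<in>R - {r0}. card (g r))"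
      by (rule sum.cong) (auto simp: g'_def)
    moreover have "card (g' r0) < card (g r0)"
      using card_Diff1_less[OF gfin[OF r0] x] unfolding g'_def by simp
    ultimately have "\<mu> g' < \<mu> g" by linarith
    moreover have "\<mu> g \<le> \<mu> g'" using gmin v' g'_def by blast
    ultimately show False by simp
  qed
  have dle: "\<And>r. r \<in> R \<Longrightarrow> d (g r) \<le> int (card (g r)) - 2 \<or> (\<forall>r'\<in>R. g r' = g r \<longrightarrow> r' = r)"
  proof -
    fix r assume r: "r \<in> R"
    show "d (g r) \<le> int (card (g r)) - 2 \<or> (\<forall>r'\<in>R. g r' = g r \<longrightarrow> r' = r)"
    proof (cases "\<forall>r'\<in>R. g r' = g r \<longrightarrow> r' = r")
      case True then show ?thesis by blast
    next
      case False
      then obtain r' where r': "r' \<in> R" "g r' = g r" "r' \<noteq> r" by blast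
      have "insert r' {r} \<subseteq> {q\<in>R. g q \<subseteq> g r}" using r r' by auto
      then have "card (insert r' {r}) \<le> Nc R g (g r)" unfolding Nc_def by (rule card_mono[OF Nfin])
      then have "2 \<le> Nc R g (g r)" using r' by simp
      moreover have "d (g r) \<le> Dg R g (g r)" using valid_ge[OF v gA[OF r]] .
      ultimately show ?thesis unfolding Dg_def by simp
    qed
  qed
  have dge: "\<And>r. r \<in> R \<Longrightarrow> int (card (g r)) - 1 \<le> d (g r)"
  proof -
    fix r assume r: "r \<in> R"
    then obtain x where x: "x \<in> g r" using gsub by blast
    have "d (g r - {x}) \<le> d (g r)" by (rule dim_mono) (use gA[OF r] in auto)
    then show "int (card (g r)) - 1 \<le> d (g r)" using circ[OF r x] by simp
  qed
  have inj: "inj_on g R"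
  proof (rule inj_onI)
    fix r r' assume r: "r \<in> R" and r': "r' \<in> R" and e: "g r = g r'"
    show "r = r'" using dle[OF r'] dge[OF r'] r e by auto
  qed
  define Fl where "Fl = {F. F \<subseteq> A \<and> cl F = F}"
  have finFl: "finite Fl"
  proof -
    have "Fl \<subseteq> Pow A" unfolding Fl_def by auto
    moreover have "finite (Pow A)" using finA by simp
    ultimately show ?thesis by (rule finite_subset)
  qed
  have count: "\<And>G. G \<in> Fl \<Longrightarrow> card {r\<in>R. cl (g r) = G} = card {s\<in>S. cl s = G}"
  proof -
    fix G assume G: "G \<in> Fl"
    show "card {r\<in>R. cl (g r) = G} = card {s\<in>S. cl s = G}"
    proof (rule count_fibres[OF finFl _ finR ssys.finR[OF S] _ _ _ G])
      show "\<forall>F\<in>Fl. finite F" unfolding Fl_def using finite_sub by blast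
      show "\<forall>r\<in>R. cl (g r) \<in> Fl" unfolding Fl_def using cl_sub cl_idem gA by blast
      show "\<forall>s\<in>S. cl s \<in> Fl" unfolding Fl_def using cl_sub cl_idem ssys.Rprop[OF S] by blast
      show "\<forall>F\<in>Fl. card {r\<in>R. cl (g r) \<subseteq> F} = card {s\<in>S. cl s \<subseteq> F}"
      proof
        fix F assume F: "F \<in> Fl"
        then have FA: "F \<subseteq> A" and Ff: "cl F = F" unfolding Fl_def by auto
        have e1: "{r\<in>R. cl (g r) \<subseteq> F} = {r\<in>R. g r \<subseteq> F}"
          using flat_sub_iff[OF _ FA Ff] gA by blast
        have e2: "{s\<in>S. cl s \<subseteq> F} = R_in S F"
          unfolding R_in_def using flat_sub_iff[OF _ FA Ff] ssys.Rprop[OF S] by blast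
        have "d F \<le> Dg R g F" using valid_ge[OF v FA] .
        moreover have "Dg R g F \<le> delta R F" by (rule Dg_le_delta) (use gsub in blast)
        moreover have "delta R F = d F" using flat_delta[OF FA Ff] .
        ultimately have a: "int (card {r\<in>R. g r \<subseteq> F}) = int (card F) - d F"
          unfolding Dg_def Nc_def by simp
        have "pg_cl A S F = F" using clS FA Ff by simp
        then have "delta S F = dim A S F" using ssys.flat_delta[OF S FA] by simp
        then have b: "int (card (R_in S F)) = int (card F) - d F"
          using dimS[OF FA] unfolding delta_def by simp
        show "card {r\<in>R. cl (g r) \<subseteq> F} = card {s\<in>S. cl s \<subseteq> F}"
          using a b e1 e2 by simp
      qed
    qed
  qed
  have size: "\<And>r. r \<in> R \<Longrightarrow> card (g r) \<le> k"
  proof -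
    fix r0 assume r0: "r0 \<in> R"
    define G where "G = cl (g r0)"
    have G: "G \<in> Fl" unfolding Fl_def G_def using cl_sub cl_idem gA[OF r0] by blast
    have "r0 \<in> {r\<in>R. cl (g r) = G}" using r0 G_def by simp
    then have "card {r\<in>R. cl (g r) = G} \<noteq> 0" using Nfin finR by auto
    then have "card {s\<in>S. cl s = G} \<noteq> 0" using count[OF G] by simp
    then obtain s where s: "s \<in> S" "cl s = G" by (metis (mono_tags, lifting) Collect_empty_eq card.empty)
    have sA: "s \<subseteq> A" using s ssys.Rprop[OF S] by blast
    have "d (g r0) = d G" unfolding G_def using dim_cl[OF gA[OF r0]] by simp
    also have "\<dots> = d s" using s(2) dim_cl[OF sA] by simp
    also have "\<dots> = dim A S s" using dimS[OF sA] by simp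
    also have "\<dots> \<le> delta S s" using ssys.dim_le[OF S subset_refl sA] .
    also have "\<dots> \<le> int (card s) - 1"
    proof -
      have "s \<in> R_in S s" unfolding R_in_def using s by simp
      then have "card (R_in S s) \<noteq> 0" using ssys.fin_Rin[OF S] by auto
      then show ?thesis unfolding delta_def by simp
    qed
    finally have "d (g r0) \<le> int (card s) - 1" .
    then show "card (g r0) \<le> k" using dge[OF r0] kS s(1) by fastforce
  qed
  define T where "T = g ` R"
  have RinT: "\<And>X. card (R_in T X) = Nc R g X"
  proof -
    fix X
    have "R_in T X = g ` {r\<in>R. g r \<subseteq> X}" unfolding R_in_def T_def by auto
    moreover have "inj_on g {r\<in>R. g r \<subseteq> X}" using inj by (rule inj_on_subset) auto
    ultimately show "card (R_in T X) = Nc R g X" unfolding Nc_def by (simp add: card_image)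
  qed
  have deltaT: "\<And>X. delta T X = Dg R g X" unfolding delta_def Dg_def using RinT by simp
  have ssT: "ssys A T"
  proof (rule ssys.intro)
    show "finite A" by (rule finA)
    show "\<forall>r\<in>T. finite r \<and> r \<noteq> {} \<and> r \<subseteq> A" unfolding T_def using gA gfin gsub by blast
    show "\<forall>X. X \<subseteq> A \<longrightarrow> 0 \<le> delta T X"
    proof (intro allI impI)
      fix X assume X: "X \<subseteq> A"
      show "0 \<le> delta T X" using valid_ge[OF v X] dim_nonneg[OF X] deltaT by simp
    qed
  qed
  have dimT: "\<And>X. X \<subseteq> A \<Longrightarrow> dim A T X = d X"
  proof -
    fix X assume X: "X \<subseteq> A"
    from valid_ex[OF v X] obtain Y where Y: "X \<subseteq> Y" "Y \<subseteq> A" "Dg R g Y \<le> d X" by blast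
    have "dim A T X \<le> delta T Y" using ssys.dim_le[OF ssT Y(1,2)] .
    then have le: "dim A T X \<le> d X" using Y deltaT by simp
    from ssys.dim_ex[OF ssT X] obtain Z where Z: "X \<subseteq> Z" "Z \<subseteq> A" "delta T Z = dim A T X" by blast
    have "d X \<le> d Z" using dim_mono[OF Z(1,2)] .
    also have "\<dots> \<le> Dg R g Z" using valid_ge[OF v Z(2)] .
    finally have "d X \<le> dim A T X" using Z deltaT by simp
    then show "dim A T X = d X" using le by simp
  qed
  have clT: "\<forall>X. X \<subseteq> A \<longrightarrow> pg_cl A T X = cl X"
  proof (intro allI impI)
    fix X assume X: "X \<subseteq> A"
    have "\<And>y. y \<in> A \<Longrightarrow> dim A T (X \<union> {y}) = d (X \<union> {y})" using dimT X by simp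
    then show "pg_cl A T X = cl X" unfolding pg_cl_def using dimT[OF X] by auto
  qed
  have inC: "in_C (enat k) A T"
    unfolding in_C_def
  proof (intro conjI)
    show "finite A" by (rule finA)
    show "\<forall>r\<in>T. finite r \<and> r \<noteq> {} \<and> r \<subseteq> A" using ssys.Rprop[OF ssT] .
    show "\<forall>X. X \<subseteq> A \<longrightarrow> 0 \<le> delta T X" using ssys.nonneg[OF ssT] .
    show "\<forall>r\<in>T. enat (card r) \<le> enat k" unfolding T_def using size by auto
  qed
  have CA: "C \<subseteq> A" using ssC unfolding self_sufficient_def by blast
  have ssCT: "self_sufficient A T C"
    unfolding self_sufficient_def
  proof (intro conjI allI impI)
    show "C \<subseteq> A" by (rule CA)
    fix X' assume X': "C \<subseteq> X' \<and> X' \<subseteq> A"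
    from dim_ex[OF CA] obtain Y where Y: "C \<subseteq> Y" "Y \<subseteq> A" "delta R Y = d C" by blast
    have "delta R C \<le> delta R Y" using ssC Y unfolding self_sufficient_def by blast
    moreover have "Dg R g C \<le> delta R C" by (rule Dg_le_delta) (use gsub in blast)
    moreover have "d C \<le> d X'" using dim_mono X' by blast
    moreover have "d X' \<le> Dg R g X'" using valid_ge[OF v] X' by blast
    ultimately show "delta T C \<le> delta T X'" using deltaT Y by simp
  qed
  show ?thesis using inC clT ssCT by blast
qed

end


theorem mainTheorem12:
  fixes k :: nat and A :: "'a set" and cl :: "'a set \<Rightarrow> 'a set" and C :: "'a set"
  assumes "k \<ge> 3"
    and "in_PG (enat k) A cl"
    and "C \<subseteq> A"
    and "strong_sub \<infinity> A cl C"
  shows "strong_sub (enat k) A cl C"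
proof -
  obtain R where pR: "presentation \<infinity> A cl R" and sR: "self_sufficient A R C"
    using assms(4) unfolding strong_sub_def by blast
  obtain S where pS: "presentation (enat k) A cl S"
    using assms(2) unfolding in_PG_def by blast
  have ssR: "ssys A R" using pR unfolding presentation_def in_C_def
    by (intro ssys.intro) auto
  have ssS: "ssys A S" using pS unfolding presentation_def in_C_def
    by (intro ssys.intro) auto
  have clR: "\<forall>X. X \<subseteq> A \<longrightarrow> pg_cl A R X = cl X" using pR unfolding presentation_def by blast
  have clS: "\<forall>X. X \<subseteq> A \<longrightarrow> pg_cl A S X = pg_cl A R X"
    using pS clR unfolding presentation_def by auto
  have kS: "\<forall>s\<in>S. card s \<le> k" using pS unfolding presentation_def in_C_def by auto
  obtain T where T: "in_C (enat k) A T" "\<forall>X. X \<subseteq> A \<longrightarrow> pg_cl A T X = pg_cl A R X"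
      "self_sufficient A T C"
    using ssys.main_construct[OF ssR ssS clS kS sR] by blast
  have "presentation (enat k) A cl T" unfolding presentation_def using T(1,2) clR by auto
  then show ?thesis unfolding strong_sub_def using T(3) by blast
qed

end
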